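(* Let $\Omega\subset\mathbb{C}$ be a simply connected domain and let $(h,\mathcal{M},\mathcal{N})$ be a Weierstrass data of the second kind on $\Omega$. Then there exists a map $\mathbf{X}=(\mathbf{x}_1,\mathbf{x}_2,\mathbf{x}_3,\mathbf{x}_4):\Omega\to\mathbb{L}^4$ (unique up to an additive constant vector) with $$\mathbf{X}_z=\mathcal{M}_z\begin{bmatrix}1\\ -i\\ -h\\ h\end{bmatrix}+\mathcal{N}_z\begin{bmatrix}0\\ ih\\ \frac12(1+h^2)\\ \frac12(1-h^2)\end{bmatrix},$$ which is a conformal spacelike immersion parameterizing a marginally trapped surface in $\mathbb{L}^4$, with induced metric $$ds^2=4\left|\mathcal{M}_z-(\mathrm{Re}\,h)\,\mathcal{N}_z\right|^2|dz|^2 .$$ Moreover, up to additive constants, $\mathbf{x}_1=\mathcal{M}$ and $\mathbf{x}_3+\mathbf{x}_4=\mathcal{N}$.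
   Context: $\Omega\subset\mathbb{R}^2\equiv\mathbb{C}$ has complex coordinate $z=u+iv$, and $\partial_z=\frac12(\partial_u-i\partial_v)$, $\partial_{\overline z}=\frac12(\partial_u+i\partial_v)$; subscripts denote partial derivatives. $\mathbb{L}^4$ is $\mathbb{R}^4$ with the Lorentzian metric $\langle x,y\rangle=x_1y_1+x_2y_2+x_3y_3-x_4y_4$; this form is extended complex-bilinearly to $\mathbb{C}^4$. A map $\mathbf{X}:\Omega\to\mathbb{L}^4$ is a conformal spacelike immersion with metric $\Lambda|dz|^2=\Lambda(du^2+dv^2)$, $\Lambda>0$, iff $\langle\mathbf{X}_z,\mathbf{X}_z\rangle=0$ and $\Lambda=2\langle\mathbf{X}_z,\overline{\mathbf{X}_z}\rangle>0$. Its mean curvature vector is $\mathbf{H}=\Delta_{ds^2}\mathbf{X}=\frac{4}{\Lambda}\mathbf{X}_{z\overline z}$. A spacelike surface is marginally trapped if $\langle\mathbf{H},\mathbf{H}\rangle=0$. A Weierstrass data of the second kind on $\Omega$ is a triple $(h,\mathcal{M},\mathcal{N})$ where $h:\Omega\to\mathbb{C}\setminus\{0\}$ and $\mathcal{M},\mathcal{N}:\Omega\to\mathbb{R}$ are $\mathcal{C}^2$, satisfying $h_{\overline z}=0$, $\mathcal{M}_{z\overline z}=(\mathrm{Re}\,h)\,\mathcal{N}_{z\overline z}$, and $\mathcal{M}_z-(\mathrm{Re}\,h)\,\mathcal{N}_z\neq0$ at every point of $\Omega$. *)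

theory Defs
  imports "HOL-Analysis.Analysis"
begin

definition pdu :: "(complex \<Rightarrow> 'b::real_normed_vector) \<Rightarrow> complex \<Rightarrow> 'b" where
  "pdu f z = frechet_derivative f (at z) 1"

definition pdv :: "(complex \<Rightarrow> 'b::real_normed_vector) \<Rightarrow> complex \<Rightarrow> 'b" where
  "pdv f z = frechet_derivative f (at z) \<i>"

definition dz :: "(complex \<Rightarrow> complex) \<Rightarrow> complex \<Rightarrow> complex" where
  "dz f z = (pdu f z - \<i> * pdv f z) / 2"

definition dzbar :: "(complex \<Rightarrow> complex) \<Rightarrow> complex \<Rightarrow> complex" where
  "dzbar f z = (pdu f z + \<i> * pdv f z) / 2"

definition rdz :: "(complex \<Rightarrow> real) \<Rightarrow> complex \<Rightarrow> complex" where
  "rdz f = dz (\<lambda>w. complex_of_real (f w))"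

definition C2_on :: "complex set \<Rightarrow> (complex \<Rightarrow> real) \<Rightarrow> bool" where
  "C2_on S f \<longleftrightarrow>
     (\<forall>z\<in>S. f differentiable (at z)) \<and>
     (\<forall>z\<in>S. pdu f differentiable (at z) \<and> pdv f differentiable (at z)) \<and>
     continuous_on S (pdu (pdu f)) \<and> continuous_on S (pdv (pdu f)) \<and>
     continuous_on S (pdu (pdv f)) \<and> continuous_on S (pdv (pdv f))"

definition lor :: "complex^4 \<Rightarrow> complex^4 \<Rightarrow> complex" where
  "lor x y = x$1 * y$1 + x$2 * y$2 + x$3 * y$3 - x$4 * y$4"

definition cvec :: "complex^4 \<Rightarrow> complex^4" where
  "cvec x = (\<chi> j. cnj (x$j))"

definition Xz :: "(complex \<Rightarrow> real^4) \<Rightarrow> complex \<Rightarrow> complex^4" where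
  "Xz X z = (\<chi> j. rdz (\<lambda>w. X w $ j) z)"

definition Xzzbar :: "(complex \<Rightarrow> real^4) \<Rightarrow> complex \<Rightarrow> complex^4" where
  "Xzzbar X z = (\<chi> j. dzbar (\<lambda>w. Xz X w $ j) z)"

text \<open>Conformal factor Lambda = 2 <X_z, conj X_z> (which is real).\<close>
definition confLambda :: "(complex \<Rightarrow> real^4) \<Rightarrow> complex \<Rightarrow> real" where
  "confLambda X z = Re (2 * lor (Xz X z) (cvec (Xz X z)))"

definition conformal_spacelike_immersion :: "complex set \<Rightarrow> (complex \<Rightarrow> real^4) \<Rightarrow> bool" where
  "conformal_spacelike_immersion S X \<longleftrightarrow>
     (\<forall>j. C2_on S (\<lambda>w. X w $ j)) \<and>
     (\<forall>z\<in>S. lor (Xz X z) (Xz X z) = 0 \<and>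
             2 * lor (Xz X z) (cvec (Xz X z)) = complex_of_real (confLambda X z) \<and>
             confLambda X z > 0)"

definition meanH :: "(complex \<Rightarrow> real^4) \<Rightarrow> complex \<Rightarrow> complex^4" where
  "meanH X z = (\<chi> j. complex_of_real (4 / confLambda X z) * Xzzbar X z $ j)"

definition marginally_trapped :: "complex set \<Rightarrow> (complex \<Rightarrow> real^4) \<Rightarrow> bool" where
  "marginally_trapped S X \<longleftrightarrow> (\<forall>z\<in>S. lor (meanH X z) (meanH X z) = 0)"

definition weierstrass_data_2 ::
  "complex set \<Rightarrow> (complex \<Rightarrow> complex) \<Rightarrow> (complex \<Rightarrow> real) \<Rightarrow> (complex \<Rightarrow> real) \<Rightarrow> bool" where
  "weierstrass_data_2 \<Omega> h M N \<longleftrightarrow>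
     h holomorphic_on \<Omega> \<and> (\<forall>z\<in>\<Omega>. h z \<noteq> 0) \<and>
     C2_on \<Omega> M \<and> C2_on \<Omega> N \<and>
     (\<forall>z\<in>\<Omega>. dzbar (rdz M) z = complex_of_real (Re (h z)) * dzbar (rdz N) z) \<and>
     (\<forall>z\<in>\<Omega>. rdz M z - complex_of_real (Re (h z)) * rdz N z \<noteq> 0)"

definition XzW :: "(complex \<Rightarrow> complex) \<Rightarrow> (complex \<Rightarrow> real) \<Rightarrow> (complex \<Rightarrow> real) \<Rightarrow> complex \<Rightarrow> complex^4" where
  "XzW h M N z =
     (\<chi> j. rdz M z * (vector [1, -\<i>, - h z, h z] :: complex^4) $ j
          + rdz N z * (vector [0, \<i> * h z, (1 + (h z)\<^sup>2) / 2, (1 - (h z)\<^sup>2) / 2] :: complex^4) $ j)"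

end

theory Submission
  imports Defs "HOL-Complex_Analysis.Complex_Analysis"
begin

lemma vector_4 [simp]:
 "(vector [x,y,z,w] ::('a::zero)^4)$1 = x"
 "(vector [x,y,z,w] ::('a::zero)^4)$2 = y"
 "(vector [x,y,z,w] ::('a::zero)^4)$3 = z"
 "(vector [x,y,z,w] ::('a::zero)^4)$4 = w"
  unfolding vector_def by simp_all

definition av :: "complex \<Rightarrow> complex^4" where "av k = vector [1, -\<i>, - k, k]"
definition bv :: "complex \<Rightarrow> complex^4" where "bv k = vector [0, \<i> * k, (1 + k\<^sup>2) / 2, (1 - k\<^sup>2) / 2]"

lemma null_comb: "lor (\<chi> j. p * av k $ j + q * bv k $ j) (\<chi> j. p * av k $ j + q * bv k $ j) = 0"
  unfolding lor_def av_def bv_def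
  by (simp add: field_simps power2_eq_square)

lemma herm_comb:
  "2 * lor (\<chi> j. p * av k $ j + q * bv k $ j) (cvec (\<chi> j. p * av k $ j + q * bv k $ j))
     = complex_of_real (4 * (cmod (p - complex_of_real (Re k) * q))\<^sup>2)"
proof -
  have c: "(cmod (p - complex_of_real (Re k) * q))\<^sup>2 = (Re p - Re k * Re q)\<^sup>2 + (Im p - Re k * Im q)\<^sup>2"
    by (simp add: cmod_power2)
  show ?thesis
    unfolding lor_def av_def bv_def cvec_def c
    by (simp add: complex_eq_iff field_simps power2_eq_square)
qed


lemma rdz_rep:
  assumes "(f has_derivative (\<lambda>h. Re (g * h))) (at w)"
  shows "rdz f w = g / 2"
proof -
  have d: "((\<lambda>w. complex_of_real (f w)) has_derivative (\<lambda>h. complex_of_real (Re (g * h)))) (at w)"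
    using has_derivative_of_real[OF assms] by simp
  show ?thesis
    unfolding rdz_def dz_def pdu_def pdv_def frechet_derivative_at[OF d, symmetric]
    by (simp add: complex_eq_iff)
qed

lemma dz_rep:
  assumes "(F has_derivative (\<lambda>h. A * h + B * cnj h)) (at w)"
  shows "dz F w = A" "dzbar F w = B"
  unfolding dz_def dzbar_def pdu_def pdv_def frechet_derivative_at[OF assms, symmetric]
  by (simp_all add: complex_eq_iff algebra_simps)

definition rep :: "complex set \<Rightarrow> (complex \<Rightarrow> real) \<Rightarrow> (complex \<Rightarrow> complex) \<Rightarrow> (complex \<Rightarrow> complex) \<Rightarrow> (complex \<Rightarrow> complex) \<Rightarrow> bool" where
  "rep S f g A B \<longleftrightarrow> (\<forall>w\<in>S. (f has_derivative (\<lambda>h. Re (g w * h))) (at w) \<and>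
      (g has_derivative (\<lambda>h. A w * h + B w * cnj h)) (at w)) \<and> continuous_on S A \<and> continuous_on S B"

lemma lin_decomp:
  fixes L :: "complex \<Rightarrow> 'b::real_vector"
  assumes "linear L"
  shows "L h = Re h *\<^sub>R L 1 + Im h *\<^sub>R L \<i>"
proof -
  have "h = Re h *\<^sub>R 1 + Im h *\<^sub>R \<i>" by (simp add: complex_eq_iff)
  then have "L h = L (Re h *\<^sub>R 1 + Im h *\<^sub>R \<i>)" by simp
  also have "\<dots> = Re h *\<^sub>R L 1 + Im h *\<^sub>R L \<i>"
    using assms by (simp add: linear_add linear_scale)
  finally show ?thesis .
qed

lemma rep_C2:
  assumes "open S" "rep S f g A B"
  shows "C2_on S f"
proof -
  have fd: "\<And>w. w \<in> S \<Longrightarrow> (f has_derivative (\<lambda>h. Re (g w * h))) (at w)"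
   and gd: "\<And>w. w \<in> S \<Longrightarrow> (g has_derivative (\<lambda>h. A w * h + B w * cnj h)) (at w)"
   and cA: "continuous_on S A" and cB: "continuous_on S B"
    using assms(2) unfolding rep_def by auto
  have pu: "pdu f w = Re (g w)" if "w \<in> S" for w
    unfolding pdu_def frechet_derivative_at[OF fd[OF that], symmetric] by simp
  have pv: "pdv f w = - Im (g w)" if "w \<in> S" for w
    unfolding pdv_def frechet_derivative_at[OF fd[OF that], symmetric] by simp
  have du: "(pdu f has_derivative (\<lambda>h. Re (A w * h + B w * cnj h))) (at w)" if "w \<in> S" for w
    by (rule has_derivative_transform_within_open[OF has_derivative_Re[OF gd[OF that]] assms(1) that])
       (simp add: pu)
  have dv: "(pdv f has_derivative (\<lambda>h. - Im (A w * h + B w * cnj h))) (at w)" if "w \<in> S" for w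
    by (rule has_derivative_transform_within_open[OF has_derivative_minus[OF has_derivative_Im[OF gd[OF that]]] assms(1) that])
       (simp add: pv)
  have uu: "pdu (pdu f) w = Re (A w + B w)" if "w \<in> S" for w
    unfolding pdu_def[of "pdu f"] frechet_derivative_at[OF du[OF that], symmetric] by simp
  have vu: "pdv (pdu f) w = Re (A w * \<i> - B w * \<i>)" if "w \<in> S" for w
    unfolding pdv_def[of "pdu f"] frechet_derivative_at[OF du[OF that], symmetric] by simp
  have uv: "pdu (pdv f) w = - Im (A w + B w)" if "w \<in> S" for w
    unfolding pdu_def[of "pdv f"] frechet_derivative_at[OF dv[OF that], symmetric] by simp
  have vv: "pdv (pdv f) w = - Im (A w * \<i> - B w * \<i>)" if "w \<in> S" for w
    unfolding pdv_def[of "pdv f"] frechet_derivative_at[OF dv[OF that], symmetric] by simp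
  show ?thesis
    unfolding C2_on_def
  proof (intro conjI ballI)
    show "f differentiable at z" if "z \<in> S" for z using fd[OF that] by (auto simp: differentiable_def)
    show "pdu f differentiable at z" if "z \<in> S" for z using du[OF that] by (auto simp: differentiable_def)
    show "pdv f differentiable at z" if "z \<in> S" for z using dv[OF that] by (auto simp: differentiable_def)
    have "continuous_on S (\<lambda>w. Re (A w + B w))" by (intro continuous_intros cA cB)
    then show "continuous_on S (pdu (pdu f))"
      by (rule continuous_on_eq) (simp add: uu)
    have "continuous_on S (\<lambda>w. Re (A w * \<i> - B w * \<i>))" by (intro continuous_intros cA cB)
    then show "continuous_on S (pdv (pdu f))"
      by (rule continuous_on_eq) (simp add: vu)
    have "continuous_on S (\<lambda>w. - Im (A w + B w))" by (intro continuous_intros cA cB)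
    then show "continuous_on S (pdu (pdv f))"
      by (rule continuous_on_eq) (simp add: uv)
    have "continuous_on S (\<lambda>w. - Im (A w * \<i> - B w * \<i>))" by (intro continuous_intros cA cB)
    then show "continuous_on S (pdv (pdv f))"
      by (rule continuous_on_eq) (simp add: vv)
  qed
qed


lemma C2_rep:
  assumes "open S" "C2_on S f"
  shows "\<exists>g A B. rep S f g A B \<and> (\<forall>w\<in>S. g w = 2 * rdz f w)"
proof -
  have fdiff: "\<And>w. w \<in> S \<Longrightarrow> f differentiable at w"
    and udiff: "\<And>w. w \<in> S \<Longrightarrow> pdu f differentiable at w"
    and vdiff: "\<And>w. w \<in> S \<Longrightarrow> pdv f differentiable at w"
    and c1: "continuous_on S (pdu (pdu f))" and c2: "continuous_on S (pdv (pdu f))"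
    and c3: "continuous_on S (pdu (pdv f))" and c4: "continuous_on S (pdv (pdv f))"
    using assms(2) unfolding C2_on_def by auto
  define g where "g w = complex_of_real (pdu f w) - \<i> * complex_of_real (pdv f w)" for w
  define P where "P w = complex_of_real (pdu (pdu f) w) - \<i> * complex_of_real (pdu (pdv f) w)" for w
  define Q where "Q w = complex_of_real (pdv (pdu f) w) - \<i> * complex_of_real (pdv (pdv f) w)" for w
  define A where "A w = (P w - \<i> * Q w) / 2" for w
  define B where "B w = (P w + \<i> * Q w) / 2" for w
  have fd: "(f has_derivative (\<lambda>h. Re (g w * h))) (at w)" if "w \<in> S" for w
  proof -
    have d: "(f has_derivative frechet_derivative f (at w)) (at w)"
      using fdiff[OF that] frechet_derivative_works by blast
    have l: "linear (frechet_derivative f (at w))"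
      using d has_derivative_linear by blast
    have "frechet_derivative f (at w) = (\<lambda>h. Re (g w * h))"
    proof
      fix h
      show "frechet_derivative f (at w) h = Re (g w * h)"
        by (subst lin_decomp[OF l]) (simp add: g_def pdu_def pdv_def algebra_simps)
    qed
    then show ?thesis using d by simp
  qed
  have gd: "(g has_derivative (\<lambda>h. A w * h + B w * cnj h)) (at w)" if "w \<in> S" for w
  proof -
    have d1: "(pdu f has_derivative frechet_derivative (pdu f) (at w)) (at w)"
      using udiff[OF that] frechet_derivative_works by blast
    have d2: "(pdv f has_derivative frechet_derivative (pdv f) (at w)) (at w)"
      using vdiff[OF that] frechet_derivative_works by blast
    have l1: "linear (frechet_derivative (pdu f) (at w))"
      using d1 has_derivative_linear by blast
    have l2: "linear (frechet_derivative (pdv f) (at w))"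
      using d2 has_derivative_linear by blast
    have d: "(g has_derivative (\<lambda>h. complex_of_real (frechet_derivative (pdu f) (at w) h)
                 - \<i> * complex_of_real (frechet_derivative (pdv f) (at w) h))) (at w)"
      unfolding g_def[abs_def]
      by (intro derivative_eq_intros has_derivative_of_real d1 d2) (auto intro: d1 d2)
    have "(\<lambda>h. complex_of_real (frechet_derivative (pdu f) (at w) h)
                 - \<i> * complex_of_real (frechet_derivative (pdv f) (at w) h)) = (\<lambda>h. A w * h + B w * cnj h)"
    proof
      fix h
      show "complex_of_real (frechet_derivative (pdu f) (at w) h)
                 - \<i> * complex_of_real (frechet_derivative (pdv f) (at w) h) = A w * h + B w * cnj h"
        apply (subst lin_decomp[OF l1], subst lin_decomp[OF l2])
        apply (simp add: A_def B_def P_def Q_def pdu_def pdv_def complex_eq_iff algebra_simps)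
        apply (simp add: field_simps)
        done
    qed
    then show ?thesis using d by simp
  qed
  have cP: "continuous_on S P" unfolding P_def[abs_def] by (intro continuous_intros c1 c3)
  have cQ: "continuous_on S Q" unfolding Q_def[abs_def] by (intro continuous_intros c2 c4)
  have cA: "continuous_on S A" unfolding A_def[abs_def] by (intro continuous_intros cP cQ) auto
  have cB: "continuous_on S B" unfolding B_def[abs_def] by (intro continuous_intros cP cQ) auto
  have "rep S f g A B" unfolding rep_def using fd gd cA cB by auto
  moreover have "\<forall>w\<in>S. g w = 2 * rdz f w" by (auto simp: rdz_rep[OF fd])
  ultimately show ?thesis by blast
qed


lemma line_deriv:
  fixes F :: "complex \<Rightarrow> real"
  assumes "(F has_derivative D) (at (a + of_real s * v))"
  shows "((\<lambda>s. F (a + of_real s * v)) has_real_derivative D v) (at s)"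
proof -
  have l: "linear D" using assms has_derivative_linear by blast
  have d0: "((\<lambda>s. a + of_real s * v) has_derivative (\<lambda>s. of_real s * v)) (at s)"
    by (intro derivative_eq_intros) auto
  have "((\<lambda>s. F (a + of_real s * v)) has_derivative (\<lambda>x. D (of_real x * v))) (at s)"
    using has_derivative_compose[OF d0 assms] by simp
  moreover have "(\<lambda>x. D (of_real x * v)) = (*) (D v)"
  proof
    fix x :: real
    have "D (of_real x * v) = D (x *\<^sub>R v)" by (simp add: scaleR_conv_of_real)
    also have "\<dots> = x * D v" using l by (simp add: linear_scale)
    finally show "D (of_real x * v) = D v * x" by simp
  qed
  ultimately show ?thesis by (simp add: has_field_derivative_def)
qed

lemma schwarz:
  assumes "open S" "rep S f g A B" "p \<in> S"
  shows "Im (B p) = 0"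
proof (rule ccontr)
  have fd: "\<And>w. w \<in> S \<Longrightarrow> (f has_derivative (\<lambda>h. Re (g w * h))) (at w)"
   and gd: "\<And>w. w \<in> S \<Longrightarrow> (g has_derivative (\<lambda>h. A w * h + B w * cnj h)) (at w)"
   and cA: "continuous_on S A" and cB: "continuous_on S B"
    using assms(2) unfolding rep_def by auto
  define c where "c = Im (B p)"
  assume "Im (B p) \<noteq> 0"
  then have c0: "c \<noteq> 0" by (simp add: c_def)
  define e where "e = \<bar>c\<bar> / 4"
  have e0: "e > 0" using c0 by (simp add: e_def)
  have "isCont A p" "isCont B p"
    using cA cB assms(1,3) continuous_on_eq_continuous_at by blast+
  then obtain dA dB where dA: "dA > 0" "\<And>q. dist q p < dA \<Longrightarrow> dist (A q) (A p) < e"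
    and dB: "dB > 0" "\<And>q. dist q p < dB \<Longrightarrow> dist (B q) (B p) < e"
    using e0 unfolding continuous_at_eps_delta by metis
  obtain d0 where d0: "d0 > 0" "ball p d0 \<subseteq> S" using assms(1,3) openE by blast
  define d where "d = min d0 (min dA dB)"
  have d: "d > 0" using d0 dA dB by (simp add: d_def)
  define t where "t = d / 3"
  have t: "t > 0" using d by (simp add: t_def)
  define pt where "pt s r = p + of_real s + \<i> * of_real r" for s r :: real
  have near: "dist (pt s r) p < d" if "0 \<le> s" "s \<le> t" "0 \<le> r" "r \<le> t" for s r
  proof -
    have "dist (pt s r) p = cmod (of_real s + \<i> * of_real r)" by (simp add: pt_def dist_norm)
    also have "\<dots> \<le> cmod (of_real s) + cmod (\<i> * of_real r)" by (rule norm_triangle_ineq)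
    also have "\<dots> \<le> 2 * t" using that by (simp add: norm_mult)
    also have "\<dots> < d" using t by (simp add: t_def)
    finally show ?thesis .
  qed
  have inS: "pt s r \<in> S" if "0 \<le> s" "s \<le> t" "0 \<le> r" "r \<le> t" for s r
    using near[OF that] d0 by (auto simp: d_def dist_commute)
  have ptS: "pt s r = (p + \<i> * of_real r) + of_real s * 1" for s r by (simp add: pt_def)
  have ptR: "pt s r = (p + of_real s) + of_real r * \<i>" for s r by (simp add: pt_def algebra_simps)
  have dS: "((\<lambda>s. F (pt s r)) has_real_derivative E) (at s)"
    if "(F has_derivative D) (at (pt s r))" "D 1 = E" for F :: "complex \<Rightarrow> real" and D E s r
    using line_deriv[of F D "p + \<i> * of_real r" s 1] that by (simp add: ptS)
  have dR: "((\<lambda>r. F (pt s r)) has_real_derivative E) (at r)"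
    if "(F has_derivative D) (at (pt s r))" "D \<i> = E" for F :: "complex \<Rightarrow> real" and D E s r
    using line_deriv[of F D "p + of_real s" r \<i>] that by (simp add: ptR)
  have gRe: "((\<lambda>w. Re (g w)) has_derivative (\<lambda>h. Re (A w * h + B w * cnj h))) (at w)" if "w \<in> S" for w
    using has_derivative_Re[OF gd[OF that]] .
  have gIm: "((\<lambda>w. Re (g w * \<i>)) has_derivative (\<lambda>h. Re ((A w * h + B w * cnj h) * \<i>))) (at w)" if "w \<in> S" for w
    using has_derivative_Re[OF has_derivative_mult_left[OF gd[OF that]]] .
  obtain s1 where s1: "0 < s1" "s1 < t"
    "(f (pt t t) - f (pt t 0)) - (f (pt 0 t) - f (pt 0 0)) = (t - 0) * (Re (g (pt s1 t)) - Re (g (pt s1 0)))"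
  proof -
    have "\<exists>z. 0 < z \<and> z < t \<and> (f (pt t t) - f (pt t 0)) - (f (pt 0 t) - f (pt 0 0)) = (t - 0) * (Re (g (pt z t)) - Re (g (pt z 0)))"
    proof (rule MVT2[of 0 t "\<lambda>s. f (pt s t) - f (pt s 0)"])
      fix x assume "0 \<le> x" "x \<le> t"
      then show "((\<lambda>s. f (pt s t) - f (pt s 0)) has_real_derivative Re (g (pt x t)) - Re (g (pt x 0))) (at x)"
        using t by (intro DERIV_diff dS[OF fd[OF inS]]) auto
    qed (use t in auto)
    then show ?thesis using that by blast
  qed
  obtain r1 where r1: "0 < r1" "r1 < t"
    "Re (g (pt s1 t)) - Re (g (pt s1 0)) = (t - 0) * Re (A (pt s1 r1) * \<i> + B (pt s1 r1) * cnj \<i>)"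
  proof -
    have "\<exists>z. 0 < z \<and> z < t \<and> Re (g (pt s1 t)) - Re (g (pt s1 0)) = (t - 0) * Re (A (pt s1 z) * \<i> + B (pt s1 z) * cnj \<i>)"
    proof (rule MVT2[of 0 t "\<lambda>r. Re (g (pt s1 r))"])
      fix x assume "0 \<le> x" "x \<le> t"
      then show "((\<lambda>r. Re (g (pt s1 r))) has_real_derivative Re (A (pt s1 x) * \<i> + B (pt s1 x) * cnj \<i>)) (at x)"
        using t s1 by (intro dR[OF gRe[OF inS]]) auto
    qed (use t in auto)
    then show ?thesis using that by blast
  qed
  obtain r2 where r2: "0 < r2" "r2 < t"
    "(f (pt t t) - f (pt 0 t)) - (f (pt t 0) - f (pt 0 0)) = (t - 0) * (Re (g (pt t r2) * \<i>) - Re (g (pt 0 r2) * \<i>))"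
  proof -
    have "\<exists>z. 0 < z \<and> z < t \<and> (f (pt t t) - f (pt 0 t)) - (f (pt t 0) - f (pt 0 0)) = (t - 0) * (Re (g (pt t z) * \<i>) - Re (g (pt 0 z) * \<i>))"
    proof (rule MVT2[of 0 t "\<lambda>r. f (pt t r) - f (pt 0 r)"])
      fix x assume "0 \<le> x" "x \<le> t"
      then show "((\<lambda>r. f (pt t r) - f (pt 0 r)) has_real_derivative Re (g (pt t x) * \<i>) - Re (g (pt 0 x) * \<i>)) (at x)"
        using t by (intro DERIV_diff dR[OF fd[OF inS]]) auto
    qed (use t in auto)
    then show ?thesis using that by blast
  qed
  obtain s2 where s2: "0 < s2" "s2 < t"
    "Re (g (pt t r2) * \<i>) - Re (g (pt 0 r2) * \<i>) = (t - 0) * Re ((A (pt s2 r2) * 1 + B (pt s2 r2) * cnj 1) * \<i>)"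
  proof -
    have "\<exists>z. 0 < z \<and> z < t \<and> Re (g (pt t r2) * \<i>) - Re (g (pt 0 r2) * \<i>) = (t - 0) * Re ((A (pt z r2) * 1 + B (pt z r2) * cnj 1) * \<i>)"
    proof (rule MVT2[of 0 t "\<lambda>s. Re (g (pt s r2) * \<i>)"])
      fix x assume "0 \<le> x" "x \<le> t"
      then show "((\<lambda>s. Re (g (pt s r2) * \<i>)) has_real_derivative Re ((A (pt x r2) * 1 + B (pt x r2) * cnj 1) * \<i>)) (at x)"
        using t r2 by (intro dS[OF gIm[OF inS]]) auto
    qed (use t in auto)
    then show ?thesis using that by blast
  qed
  have eq: "t * t * (Im (B (pt s1 r1)) - Im (A (pt s1 r1))) = t * t * (- Im (A (pt s2 r2)) - Im (B (pt s2 r2)))"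
  proof -
    have h1: "Re (g (pt s1 t)) - Re (g (pt s1 0)) = t * (Im (B (pt s1 r1)) - Im (A (pt s1 r1)))"
      using r1(3) by (simp add: algebra_simps)
    have h2: "Re (g (pt t r2) * \<i>) - Re (g (pt 0 r2) * \<i>) = t * (- Im (A (pt s2 r2)) - Im (B (pt s2 r2)))"
      using s2(3) by (simp add: algebra_simps)
    have x1: "(f (pt t t) - f (pt t 0)) - (f (pt 0 t) - f (pt 0 0)) = t * (t * (Im (B (pt s1 r1)) - Im (A (pt s1 r1))))"
      using s1(3) unfolding h1 by simp
    have x2: "(f (pt t t) - f (pt 0 t)) - (f (pt t 0) - f (pt 0 0)) = t * (t * (- Im (A (pt s2 r2)) - Im (B (pt s2 r2))))"
      using r2(3) unfolding h2 by simp
    have "t * (t * (Im (B (pt s1 r1)) - Im (A (pt s1 r1)))) = t * (t * (- Im (A (pt s2 r2)) - Im (B (pt s2 r2))))"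
      using x1 x2 by linarith
    then show ?thesis by (simp add: mult.assoc)
  qed
  then have eq2: "Im (B (pt s1 r1)) - Im (A (pt s1 r1)) = - Im (A (pt s2 r2)) - Im (B (pt s2 r2))"
    using t by simp
  have q1: "dist (pt s1 r1) p < d" using near s1 r1 by simp
  have q2: "dist (pt s2 r2) p < d" using near s2 r2 by simp
  have b1: "\<bar>Im (B (pt s1 r1)) - c\<bar> < e" and b2: "\<bar>Im (B (pt s2 r2)) - c\<bar> < e"
    and a1: "\<bar>Im (A (pt s1 r1)) - Im (A p)\<bar> < e" and a2: "\<bar>Im (A (pt s2 r2)) - Im (A p)\<bar> < e"
  proof -
    have "\<bar>Im (B q) - c\<bar> < e" "\<bar>Im (A q) - Im (A p)\<bar> < e" if "dist q p < d" for q
    proof -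
      have "\<bar>Im (B q) - c\<bar> \<le> dist (B q) (B p)" unfolding c_def dist_norm
        by (metis abs_Im_le_cmod minus_complex.simps(2))
      also have "\<dots> < e" using dB that by (simp add: d_def)
      finally show "\<bar>Im (B q) - c\<bar> < e" .
      have "\<bar>Im (A q) - Im (A p)\<bar> \<le> dist (A q) (A p)" unfolding dist_norm
        by (metis abs_Im_le_cmod minus_complex.simps(2))
      also have "\<dots> < e" using dA that by (simp add: d_def)
      finally show "\<bar>Im (A q) - Im (A p)\<bar> < e" .
    qed
    then show "\<bar>Im (B (pt s1 r1)) - c\<bar> < e" "\<bar>Im (B (pt s2 r2)) - c\<bar> < e"
      "\<bar>Im (A (pt s1 r1)) - Im (A p)\<bar> < e" "\<bar>Im (A (pt s2 r2)) - Im (A p)\<bar> < e"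
      using q1 q2 by auto
  qed
  show False
    using eq2 b1 b2 a1 a2 c0 unfolding e_def by (cases "c > 0") (auto simp: abs_less_iff)
qed


definition LB :: "complex \<Rightarrow> complex \<Rightarrow> complex \<Rightarrow>\<^sub>L real" where
  "LB c1 c2 = Blinfun (\<lambda>h. Re (c1 * h + c2 * cnj h))"

lemma LB_apply: "blinfun_apply (LB c1 c2) h = Re (c1 * h + c2 * cnj h)"
proof -
  have "bounded_linear (\<lambda>h. Re (c1 * h + c2 * cnj h))"
  proof (rule bounded_linear_intro[where K="cmod c1 + cmod c2"])
    fix x
    have "norm (Re (c1 * x + c2 * cnj x)) \<le> cmod (c1 * x + c2 * cnj x)" by (metis abs_Re_le_cmod real_norm_def)
    also have "\<dots> \<le> cmod (c1 * x) + cmod (c2 * cnj x)" by (rule norm_triangle_ineq)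
    also have "\<dots> = norm x * (cmod c1 + cmod c2)" by (simp add: norm_mult algebra_simps)
    finally show "norm (Re (c1 * x + c2 * cnj x)) \<le> norm x * (cmod c1 + cmod c2)" .
  qed (simp_all add: algebra_simps scaleR_conv_of_real)
  then show ?thesis unfolding LB_def by (simp add: bounded_linear_Blinfun_apply)
qed

lemma LB_norm: "norm (LB c1 c2) \<le> cmod c1 + cmod c2"
proof (rule norm_blinfun_bound)
  fix h
  have "norm (blinfun_apply (LB c1 c2) h) \<le> cmod (c1 * h + c2 * cnj h)"
    unfolding LB_apply by (metis abs_Re_le_cmod real_norm_def)
  also have "\<dots> \<le> cmod (c1 * h) + cmod (c2 * cnj h)" by (rule norm_triangle_ineq)
  also have "\<dots> = (cmod c1 + cmod c2) * norm h" by (simp add: norm_mult algebra_simps)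
  finally show "norm (blinfun_apply (LB c1 c2) h) \<le> (cmod c1 + cmod c2) * norm h" .
qed simp

lemma LB_diff: "LB c1 c2 - LB d1 d2 = LB (c1 - d1) (c2 - d2)"
  by (rule blinfun_eqI) (simp add: blinfun.diff_left LB_apply algebra_simps)

lemma continuous_on_LB:
  assumes "continuous_on S c1" "continuous_on S c2"
  shows "continuous_on S (\<lambda>x. LB (c1 x) (c2 x))"
  unfolding continuous_on_def
proof (intro ballI)
  fix x assume x: "x \<in> S"
  have t1: "(c1 \<longlongrightarrow> c1 x) (at x within S)" and t2: "(c2 \<longlongrightarrow> c2 x) (at x within S)"
    using assms x unfolding continuous_on_def by auto
  have lim: "((\<lambda>y. cmod (c1 y - c1 x) + cmod (c2 y - c2 x)) \<longlongrightarrow> 0) (at x within S)"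
    using tendsto_add[OF tendsto_norm_zero[OF LIM_zero[OF t1]] tendsto_norm_zero[OF LIM_zero[OF t2]]] by simp
  have "((\<lambda>y. LB (c1 y) (c2 y) - LB (c1 x) (c2 x)) \<longlongrightarrow> 0) (at x within S)"
  proof (rule Lim_null_comparison[where g="\<lambda>y. cmod (c1 y - c1 x) + cmod (c2 y - c2 x)"])
    show "\<forall>\<^sub>F y in at x within S. norm (LB (c1 y) (c2 y) - LB (c1 x) (c2 x)) \<le> cmod (c1 y - c1 x) + cmod (c2 y - c2 x)"
      unfolding LB_diff by (intro always_eventually allI LB_norm)
  qed (rule lim)
  then show "((\<lambda>x. LB (c1 x) (c2 x)) \<longlongrightarrow> LB (c1 x) (c2 x)) (at x within S)"
    by (rule LIM_zero_cancel)
qed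

lemma poincare_convex:
  fixes g A B :: "complex \<Rightarrow> complex"
  assumes T: "convex T" "open T" "0 \<in> T"
    and gd: "\<And>w. w \<in> T \<Longrightarrow> (g has_derivative (\<lambda>h. A w * h + B w * cnj h)) (at w)"
    and cA: "continuous_on T A" and cB: "continuous_on T B"
    and re: "\<And>w. w \<in> T \<Longrightarrow> Im (B w) = 0"
  shows "\<exists>F. \<forall>w\<in>T. (F has_derivative (\<lambda>h. Re (g w * h))) (at w)"
proof -
  have sT: "t *\<^sub>R x \<in> T" if "x \<in> T" "0 \<le> t" "t \<le> 1" for x t
  proof -
    have "t *\<^sub>R x + (1 - t) *\<^sub>R 0 \<in> T"
      using T(1) T(3) that unfolding convex_def by (meson diff_ge_0_iff_ge le_add_diff_inverse)
    then show ?thesis by simp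
  qed
  have cg: "continuous_on T g"
    using gd has_derivative_continuous continuous_at_imp_continuous_on by blast
  define K where "K = T \<times> cbox (0::real) 1"
  have cm: "continuous_on K (\<lambda>p. snd p *\<^sub>R fst p)"
    by (intro continuous_intros)
  have mK: "(\<lambda>p. snd p *\<^sub>R fst p) ` K \<subseteq> T" using sT by (auto simp: K_def)
  have cgK: "continuous_on K (\<lambda>p. g (snd p *\<^sub>R fst p))"
    using continuous_on_compose2[OF cg cm mK] .
  have cAK: "continuous_on K (\<lambda>p. A (snd p *\<^sub>R fst p))"
    using continuous_on_compose2[OF cA cm mK] .
  have cBK: "continuous_on K (\<lambda>p. B (snd p *\<^sub>R fst p))"
    using continuous_on_compose2[OF cB cm mK] .
  define F where "F x = integral (cbox 0 1) (\<lambda>t::real. Re (g (t *\<^sub>R x) * x))" for x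
  define fx where "fx x t = LB (of_real t * A (t *\<^sub>R x) * x + g (t *\<^sub>R x)) (of_real t * B (t *\<^sub>R x) * x)" for x and t :: real
  have cfx: "continuous_on K (\<lambda>(x, t). fx x t)"
  proof -
    have "continuous_on K (\<lambda>p. LB (of_real (snd p) * A (snd p *\<^sub>R fst p) * fst p + g (snd p *\<^sub>R fst p))
             (of_real (snd p) * B (snd p *\<^sub>R fst p) * fst p))"
      by (intro continuous_on_LB continuous_intros cAK cBK cgK)
    then show ?thesis by (simp add: fx_def split_beta)
  qed
  have dcurve: "((\<lambda>t. g (t *\<^sub>R x)) has_derivative (\<lambda>s. A (t *\<^sub>R x) * (s *\<^sub>R x) + B (t *\<^sub>R x) * cnj (s *\<^sub>R x))) (at t within U)"
    if "x \<in> T" "0 \<le> t" "t \<le> 1" for x t U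
  proof -
    have "((\<lambda>t. t *\<^sub>R x) has_derivative (\<lambda>s. s *\<^sub>R x)) (at t within U)"
      by (intro derivative_eq_intros) auto
    from has_derivative_compose[OF this gd[OF sT[OF that]]] show ?thesis .
  qed
  show ?thesis
  proof (intro exI ballI)
    fix x0 assume x0: "x0 \<in> T"
    have L: "(F has_derivative integral (cbox 0 1) (fx x0)) (at x0 within T)"
      unfolding F_def[abs_def]
    proof (rule leibniz_rule[where fx=fx])
      fix x and t :: real assume x: "x \<in> T" and t: "t \<in> cbox 0 1"
      then have t01: "0 \<le> t" "t \<le> 1" by auto
      have "((\<lambda>x. t *\<^sub>R x) has_derivative (\<lambda>h. t *\<^sub>R h)) (at x within T)"
        by (intro derivative_eq_intros) auto
      from has_derivative_compose[OF this gd[OF sT[OF x t01]]]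
      have d1: "((\<lambda>x. g (t *\<^sub>R x)) has_derivative (\<lambda>h. A (t *\<^sub>R x) * (t *\<^sub>R h) + B (t *\<^sub>R x) * cnj (t *\<^sub>R h))) (at x within T)" .
      have d2: "((\<lambda>x. Re (g (t *\<^sub>R x) * x)) has_derivative
          (\<lambda>h. Re (g (t *\<^sub>R x) * h + (A (t *\<^sub>R x) * (t *\<^sub>R h) + B (t *\<^sub>R x) * cnj (t *\<^sub>R h)) * x))) (at x within T)"
        by (intro has_derivative_Re has_derivative_mult d1 has_derivative_ident)
      show "((\<lambda>x. Re (g (t *\<^sub>R x) * x)) has_derivative blinfun_apply (fx x t)) (at x within T)"
        by (rule has_derivative_eq_rhs[OF d2])
           (auto simp: fx_def LB_apply scaleR_conv_of_real algebra_simps)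
    next
      fix x assume x: "x \<in> T"
      have "continuous_on (cbox 0 1) (\<lambda>t::real. Re (g (t *\<^sub>R x) * x))"
      proof -
        have c: "continuous_on (cbox 0 1) (\<lambda>t::real. t *\<^sub>R x)" by (intro continuous_intros)
        have "(\<lambda>t::real. t *\<^sub>R x) ` cbox 0 1 \<subseteq> T" using sT x by auto
        from continuous_on_compose2[OF cg c this] show ?thesis by (intro continuous_intros)
      qed
      then show "(\<lambda>t. Re (g (t *\<^sub>R x) * x)) integrable_on cbox 0 1"
        by (rule integrable_continuous)
    next
      show "continuous_on (T \<times> cbox 0 1) (\<lambda>(x, t). fx x t)" using cfx by (simp add: K_def)
    qed (use x0 T in auto)
    then have L': "(F has_derivative integral (cbox 0 1) (fx x0)) (at x0)"
      using at_within_open[OF x0 T(2)] by simp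
    have "blinfun_apply (integral (cbox 0 1) (fx x0)) = (\<lambda>h. Re (g x0 * h))"
    proof
      fix h
      have cfx0: "continuous_on (cbox 0 1) (fx x0)"
      proof -
        have c: "continuous_on (cbox 0 1) (\<lambda>t::real. (x0, t))" by (intro continuous_intros)
        have "(\<lambda>t::real. (x0, t)) ` cbox 0 1 \<subseteq> K" using x0 by (auto simp: K_def)
        from continuous_on_compose2[OF cfx c this] show ?thesis by simp
      qed
      have "blinfun_apply (integral (cbox 0 1) (fx x0)) h = integral (cbox 0 1) (\<lambda>t. blinfun_apply (fx x0 t) h)"
        by (rule blinfun_apply_integral[OF integrable_continuous[OF cfx0]])
      also have "\<dots> = Re (g x0 * h)"
      proof -
        define \<phi> where "\<phi> t = t * Re (g (t *\<^sub>R x0) * h)" for t :: real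
        have vd: "(\<phi> has_vector_derivative blinfun_apply (fx x0 t) h) (at t within {0..1})"
          if "t \<in> {0..1}" for t
        proof -
          have t01: "0 \<le> t" "t \<le> 1" using that by auto
          obtain b where Bt: "B (t *\<^sub>R x0) = of_real b"
            using re[OF sT[OF x0 t01]] by (metis complex_eq_iff complex_of_real_def complex.sel)
          have d: "(\<phi> has_derivative (\<lambda>s. t * Re ((A (t *\<^sub>R x0) * (s *\<^sub>R x0) + B (t *\<^sub>R x0) * cnj (s *\<^sub>R x0)) * h)
                    + s * Re (g (t *\<^sub>R x0) * h))) (at t within {0..1})"
            unfolding \<phi>_def[abs_def]
            by (intro has_derivative_mult has_derivative_ident has_derivative_Re has_derivative_mult_left dcurve[OF x0 t01])
          show ?thesis unfolding has_vector_derivative_def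
            apply (rule has_derivative_eq_rhs[OF d])
            apply (rule ext)
            using Bt apply (simp add: fx_def LB_apply scaleR_conv_of_real algebra_simps)
            done
        qed
        have "((\<lambda>t. blinfun_apply (fx x0 t) h) has_integral \<phi> 1 - \<phi> 0) {0..1}"
          by (rule fundamental_theorem_of_calculus[OF _ vd]) auto
        then have "integral {0..1} (\<lambda>t. blinfun_apply (fx x0 t) h) = \<phi> 1 - \<phi> 0"
          by (rule integral_unique)
        then show ?thesis by (simp add: \<phi>_def cbox_interval)
      qed
      finally show "blinfun_apply (integral (cbox 0 1) (fx x0)) h = Re (g x0 * h)" .
    qed
    then show "(F has_derivative (\<lambda>h. Re (g x0 * h))) (at x0)" using L' by simp
  qed
qed


lemma poincare_sc:
  fixes g A B :: "complex \<Rightarrow> complex"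
  assumes S: "open S" "simply_connected S"
    and gd: "\<And>w. w \<in> S \<Longrightarrow> (g has_derivative (\<lambda>h. A w * h + B w * cnj h)) (at w)"
    and cA: "continuous_on S A" and cB: "continuous_on S B"
    and re: "\<And>w. w \<in> S \<Longrightarrow> Im (B w) = 0"
  shows "\<exists>F. \<forall>w\<in>S. (F has_derivative (\<lambda>h. Re (g w * h))) (at w)"
proof -
  have "S = {} \<or> S = UNIV \<or>
           (\<exists>f k. f holomorphic_on S \<and> k holomorphic_on ball 0 1 \<and>
                 (\<forall>z \<in> S. f z \<in> ball 0 1 \<and> k(f z) = z) \<and>
                 (\<forall>z \<in> ball 0 1. k z \<in> S \<and> f(k z) = z))"
    using simply_connected_eq_biholomorphic_to_disc[OF S(1)] S(2) by blast
  then consider "S = {}" | "S = UNIV" | f k where "f holomorphic_on S" "k holomorphic_on ball 0 1"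
      "\<forall>z \<in> S. f z \<in> ball 0 1 \<and> k(f z) = z" "\<forall>z \<in> ball 0 1. k z \<in> S \<and> f(k z) = z"
    by blast
  then show ?thesis
  proof cases
    case 1 then show ?thesis by auto
  next
    case 2 then show ?thesis
      using poincare_convex[of UNIV g A B] gd cA cB re by auto
  next
    case 3
    note fh = 3(1) and kh = 3(2) and fS = 3(3) and kT = 3(4)
    define T where "T = ball (0::complex) 1"
    have oT: "open T" and cvT: "convex T" and T0: "0 \<in> T" by (auto simp: T_def)
    have kTS: "k ` T \<subseteq> S" using kT by (auto simp: T_def)
    have hk': "deriv k holomorphic_on T" using holomorphic_deriv[OF kh] by (simp add: T_def)
    have hk'': "deriv (deriv k) holomorphic_on T" using holomorphic_deriv[OF hk' oT] .
    have dk: "(k has_field_derivative deriv k w) (at w)" if "w \<in> T" for w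
      using holomorphic_derivI[OF kh _ that[unfolded T_def]] by simp
    have dk': "(deriv k has_field_derivative deriv (deriv k) w) (at w)" if "w \<in> T" for w
      using holomorphic_derivI[OF hk' oT that] .
    have ck: "continuous_on T k" using holomorphic_on_imp_continuous_on kh by (simp add: T_def)
    have ck': "continuous_on T (deriv k)" using holomorphic_on_imp_continuous_on hk' by blast
    have ck'': "continuous_on T (deriv (deriv k))" using holomorphic_on_imp_continuous_on hk'' by blast
    have cg: "continuous_on S g"
      using gd has_derivative_continuous continuous_at_imp_continuous_on by blast
    define g2 where "g2 w = g (k w) * deriv k w" for w
    define A2 where "A2 w = A (k w) * (deriv k w)\<^sup>2 + g (k w) * deriv (deriv k) w" for w
    define B2 where "B2 w = B (k w) * (deriv k w * cnj (deriv k w))" for w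
    have g2d: "(g2 has_derivative (\<lambda>h. A2 w * h + B2 w * cnj h)) (at w)" if w: "w \<in> T" for w
    proof -
      have k1: "(k has_derivative (*) (deriv k w)) (at w)" using dk[OF w] by (simp add: has_field_derivative_def)
      have k2: "(deriv k has_derivative (*) (deriv (deriv k) w)) (at w)" using dk'[OF w] by (simp add: has_field_derivative_def)
      have kw: "k w \<in> S" using kTS w by auto
      have d1: "((\<lambda>w. g (k w)) has_derivative (\<lambda>h. A (k w) * (deriv k w * h) + B (k w) * cnj (deriv k w * h))) (at w)"
        using has_derivative_compose[OF k1 gd[OF kw]] .
      have d2: "(g2 has_derivative (\<lambda>h. g (k w) * (deriv (deriv k) w * h) + (A (k w) * (deriv k w * h) + B (k w) * cnj (deriv k w * h)) * deriv k w)) (at w)"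
        unfolding g2_def[abs_def] by (rule has_derivative_mult[OF d1 k2])
      show ?thesis
        by (rule has_derivative_eq_rhs[OF d2]) (auto simp: A2_def B2_def algebra_simps power2_eq_square)
    qed
    have cA2: "continuous_on T A2"
    proof -
      have "continuous_on T (\<lambda>w. A (k w))" using continuous_on_compose2[OF cA ck kTS] .
      moreover have "continuous_on T (\<lambda>w. g (k w))" using continuous_on_compose2[OF cg ck kTS] .
      ultimately show ?thesis unfolding A2_def[abs_def] by (intro continuous_intros ck' ck'')
    qed
    have cB2: "continuous_on T B2"
    proof -
      have "continuous_on T (\<lambda>w. B (k w))" using continuous_on_compose2[OF cB ck kTS] .
      then show ?thesis unfolding B2_def[abs_def] by (intro continuous_intros ck')
    qed
    have re2: "Im (B2 w) = 0" if "w \<in> T" for w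
    proof -
      have "Im (B (k w)) = 0" using re kTS that by auto
      then show ?thesis by (simp add: B2_def)
    qed
    obtain F2 where F2: "\<And>w. w \<in> T \<Longrightarrow> (F2 has_derivative (\<lambda>h. Re (g2 w * h))) (at w)"
      using poincare_convex[OF cvT oT T0 g2d cA2 cB2 re2] by blast
    show ?thesis
    proof (intro exI ballI)
      fix z assume z: "z \<in> S"
      have fz: "f z \<in> T" and kfz: "k (f z) = z" using fS z by (auto simp: T_def)
      have df: "(f has_field_derivative deriv f z) (at z)" using holomorphic_derivI[OF fh S(1) z] .
      have "((\<lambda>z. k (f z)) has_field_derivative deriv k (f z) * deriv f z) (at z)"
        by (rule DERIV_chain2[OF dk[OF fz] df])
      then have "((\<lambda>z. z) has_field_derivative deriv k (f z) * deriv f z) (at z)"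
        by (rule has_field_derivative_transform_within_open[OF _ S(1) z]) (use fS in \<open>auto\<close>)
      then have one: "deriv k (f z) * deriv f z = 1"
        using DERIV_ident DERIV_unique by blast
      have "((\<lambda>z. F2 (f z)) has_derivative (\<lambda>h. Re (g2 (f z) * (deriv f z * h)))) (at z)"
        using has_derivative_compose[OF df[unfolded has_field_derivative_def] F2[OF fz]] .
      moreover have "(\<lambda>h. Re (g2 (f z) * (deriv f z * h))) = (\<lambda>h. Re (g z * h))"
      proof
        fix h
        have "g2 (f z) * (deriv f z * h) = g z * (deriv k (f z) * deriv f z) * h"
          by (simp add: g2_def kfz algebra_simps)
        also have "\<dots> = g z * h" by (simp add: one)
        finally show "Re (g2 (f z) * (deriv f z * h)) = Re (g z * h)" by (rule arg_cong)
      qed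
      ultimately show "((\<lambda>z. F2 (f z)) has_derivative (\<lambda>h. Re (g z * h))) (at z)" by simp
    qed
  qed
qed


lemma rep_cong:
  assumes "open S" "rep S f g A B"
    and "\<And>w. w \<in> S \<Longrightarrow> f' w = f w \<and> g' w = g w \<and> A' w = A w \<and> B' w = B w"
  shows "rep S f' g' A' B'"
  unfolding rep_def
proof (intro conjI ballI)
  fix w assume w: "w \<in> S"
  have fd: "(f has_derivative (\<lambda>h. Re (g w * h))) (at w)"
   and gd: "(g has_derivative (\<lambda>h. A w * h + B w * cnj h)) (at w)"
    using assms(2) w unfolding rep_def by auto
  show "(f' has_derivative (\<lambda>h. Re (g' w * h))) (at w)"
    using has_derivative_transform_within_open[OF fd assms(1) w, of f'] assms(3) w by auto
  show "(g' has_derivative (\<lambda>h. A' w * h + B' w * cnj h)) (at w)"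
    using has_derivative_transform_within_open[OF gd assms(1) w, of g'] assms(3) w by auto
next
  show "continuous_on S A'"
    using assms(2) unfolding rep_def by (metis (no_types, lifting) assms(3) continuous_on_eq)
  show "continuous_on S B'"
    using assms(2) unfolding rep_def by (metis (no_types, lifting) assms(3) continuous_on_eq)
qed

lemma rep_lin:
  assumes "rep S f1 g1 A1 B1" "rep S f2 g2 A2 B2"
  shows "rep S (\<lambda>w. a * f1 w + b * f2 w) (\<lambda>w. of_real a * g1 w + of_real b * g2 w)
     (\<lambda>w. of_real a * A1 w + of_real b * A2 w) (\<lambda>w. of_real a * B1 w + of_real b * B2 w)"
  unfolding rep_def
proof (intro conjI ballI)
  fix w assume w: "w \<in> S"
  have f1: "(f1 has_derivative (\<lambda>h. Re (g1 w * h))) (at w)"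
   and d1: "(g1 has_derivative (\<lambda>h. A1 w * h + B1 w * cnj h)) (at w)"
   and f2: "(f2 has_derivative (\<lambda>h. Re (g2 w * h))) (at w)"
   and d2: "(g2 has_derivative (\<lambda>h. A2 w * h + B2 w * cnj h)) (at w)"
    using assms w unfolding rep_def by auto
  show "((\<lambda>w. a * f1 w + b * f2 w) has_derivative (\<lambda>h. Re ((of_real a * g1 w + of_real b * g2 w) * h))) (at w)"
    by (rule has_derivative_eq_rhs[OF has_derivative_add[OF has_derivative_mult[OF has_derivative_const f1] has_derivative_mult[OF has_derivative_const f2]]]) (auto simp: algebra_simps)
  show "((\<lambda>w. of_real a * g1 w + of_real b * g2 w) has_derivative
      (\<lambda>h. (of_real a * A1 w + of_real b * A2 w) * h + (of_real a * B1 w + of_real b * B2 w) * cnj h)) (at w)"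
    by (rule has_derivative_eq_rhs[OF has_derivative_add[OF has_derivative_mult[OF has_derivative_const d1] has_derivative_mult[OF has_derivative_const d2]]]) (auto simp: algebra_simps)
next
  show "continuous_on S (\<lambda>w. of_real a * A1 w + of_real b * A2 w)"
    using assms unfolding rep_def by (auto intro!: continuous_intros)
  show "continuous_on S (\<lambda>w. of_real a * B1 w + of_real b * B2 w)"
    using assms unfolding rep_def by (auto intro!: continuous_intros)
qed

lemma form_mult:
  assumes "(k has_field_derivative k') (at w)" "(g has_derivative (\<lambda>h. A * h + B * cnj h)) (at w)"
  shows "((\<lambda>w. k w * g w) has_derivative (\<lambda>h. (k' * g w + k w * A) * h + (k w * B) * cnj h)) (at w)"
proof -
  have k: "(k has_derivative (*) k') (at w)" using assms(1) by (simp add: has_field_derivative_def)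
  show ?thesis
    by (rule has_derivative_eq_rhs[OF has_derivative_mult[OF k assms(2)]]) (auto simp: algebra_simps)
qed

lemma form_add:
  assumes "(g1 has_derivative (\<lambda>h. A1 * h + B1 * cnj h)) (at w)" "(g2 has_derivative (\<lambda>h. A2 * h + B2 * cnj h)) (at w)"
  shows "((\<lambda>w. g1 w + g2 w) has_derivative (\<lambda>h. (A1 + A2) * h + (B1 + B2) * cnj h)) (at w)"
  by (rule has_derivative_eq_rhs[OF has_derivative_add[OF assms]]) (auto simp: algebra_simps)


lemma half_deriv:
  assumes "open S" "z \<in> S" "(g has_derivative (\<lambda>h. A * h + B * cnj h)) (at z)"
    and "\<And>w. w \<in> S \<Longrightarrow> G w = 1/2 * g w"
  shows "dzbar G z = 1/2 * B"
proof -
  have "((\<lambda>w. 1/2 * g w) has_derivative (\<lambda>h. (0 * g z + 1/2 * A) * h + (1/2 * B) * cnj h)) (at z)"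
    by (rule form_mult[OF DERIV_const assms(3)])
  then have "(G has_derivative (\<lambda>h. (0 * g z + 1/2 * A) * h + (1/2 * B) * cnj h)) (at z)"
    by (rule has_derivative_transform_within_open[OF _ assms(1,2)]) (simp add: assms(4))
  then show ?thesis by (rule dz_rep(2))
qed

lemma construct:
  assumes oS: "open \<Omega>" and sc: "simply_connected \<Omega>" and wd: "weierstrass_data_2 \<Omega> h M N"
  shows "\<exists>m Am Bm n An Bn X. rep \<Omega> M m Am Bm \<and> (\<forall>w\<in>\<Omega>. m w = 2 * rdz M w) \<and>
     rep \<Omega> N n An Bn \<and> (\<forall>w\<in>\<Omega>. n w = 2 * rdz N w) \<and>
     (\<forall>j. \<exists>Aj. rep \<Omega> (\<lambda>w. X w $ j) (\<lambda>w. m w * av (h w) $ j + n w * bv (h w) $ j) Aj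
                 (\<lambda>w. Bm w * av (h w) $ j + Bn w * bv (h w) $ j)) \<and>
     (\<forall>z\<in>\<Omega>. X z $ 1 = M z \<and> X z $ 3 + X z $ 4 = N z)"
proof -
  have hol: "h holomorphic_on \<Omega>" and C2M: "C2_on \<Omega> M" and C2N: "C2_on \<Omega> N"
    and wz: "\<And>z. z \<in> \<Omega> \<Longrightarrow> dzbar (rdz M) z = complex_of_real (Re (h z)) * dzbar (rdz N) z"
    using wd unfolding weierstrass_data_2_def by auto
  obtain m Am Bm where rM: "rep \<Omega> M m Am Bm" and mM: "\<forall>w\<in>\<Omega>. m w = 2 * rdz M w"
    using C2_rep[OF oS C2M] by blast
  obtain n An Bn where rN: "rep \<Omega> N n An Bn" and nN: "\<forall>w\<in>\<Omega>. n w = 2 * rdz N w"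
    using C2_rep[OF oS C2N] by blast
  have dm: "\<And>w. w \<in> \<Omega> \<Longrightarrow> (m has_derivative (\<lambda>h. Am w * h + Bm w * cnj h)) (at w)"
    and cAm: "continuous_on \<Omega> Am" and cBm: "continuous_on \<Omega> Bm"
    using rM unfolding rep_def by auto
  have dn: "\<And>w. w \<in> \<Omega> \<Longrightarrow> (n has_derivative (\<lambda>h. An w * h + Bn w * cnj h)) (at w)"
    and cAn: "continuous_on \<Omega> An" and cBn: "continuous_on \<Omega> Bn"
    using rN unfolding rep_def by auto
  have cm: "continuous_on \<Omega> m"
    using dm has_derivative_continuous continuous_at_imp_continuous_on by blast
  have cn: "continuous_on \<Omega> n"
    using dn has_derivative_continuous continuous_at_imp_continuous_on by blast
  have BnR: "Im (Bn w) = 0" if "w \<in> \<Omega>" for w using schwarz[OF oS rN that] .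
  have BmE: "Bm w = complex_of_real (Re (h w)) * Bn w" if w: "w \<in> \<Omega>" for w
  proof -
    have "dzbar (rdz M) w = 1/2 * Bm w"
      by (rule half_deriv[OF oS w dm[OF w]]) (simp add: mM)
    moreover have "dzbar (rdz N) w = 1/2 * Bn w"
      by (rule half_deriv[OF oS w dn[OF w]]) (simp add: nN)
    ultimately show ?thesis using wz[OF w] by simp
  qed
  have dh: "(h has_field_derivative deriv h w) (at w)" if "w \<in> \<Omega>" for w
    using holomorphic_derivI[OF hol oS that] .
  have ch: "continuous_on \<Omega> h" using holomorphic_on_imp_continuous_on[OF hol] .
  have cdh: "continuous_on \<Omega> (deriv h)"
    using holomorphic_on_imp_continuous_on[OF holomorphic_deriv[OF hol oS]] .
  define g2 where "g2 w = (-\<i>) * m w + (\<i> * h w) * n w" for w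
  define A2 where "A2 w = (0 * m w + (-\<i>) * Am w) + ((\<i> * deriv h w) * n w + (\<i> * h w) * An w)" for w
  define B2 where "B2 w = (-\<i>) * Bm w + (\<i> * h w) * Bn w" for w
  have d2: "(g2 has_derivative (\<lambda>k. A2 w * k + B2 w * cnj k)) (at w)" if w: "w \<in> \<Omega>" for w
    unfolding g2_def[abs_def] A2_def B2_def
    by (rule form_add[OF form_mult[OF DERIV_const dm[OF w]] form_mult[OF DERIV_cmult[OF dh[OF w]] dn[OF w]]])
  have cA2: "continuous_on \<Omega> A2" unfolding A2_def[abs_def]
    by (intro continuous_intros cm cn cAm cAn ch cdh)
  have cB2: "continuous_on \<Omega> B2" unfolding B2_def[abs_def]
    by (intro continuous_intros cBm cBn ch)
  have re2: "Im (B2 w) = 0" if "w \<in> \<Omega>" for w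
    using BmE[OF that] BnR[OF that] by (simp add: B2_def)
  obtain y2 where y2: "\<And>w. w \<in> \<Omega> \<Longrightarrow> (y2 has_derivative (\<lambda>k. Re (g2 w * k))) (at w)"
    using poincare_sc[OF oS sc d2 cA2 cB2 re2] by blast
  have r2: "rep \<Omega> y2 g2 A2 B2" unfolding rep_def using y2 d2 cA2 cB2 by auto
  \<comment> \<open>difference of third and fourth components\<close>
  define g3 where "g3 w = (-2 * h w) * m w + (h w * h w) * n w" for w
  define A3 where "A3 w = (((-2) * deriv h w) * m w + (-2 * h w) * Am w) + ((deriv h w * h w + deriv h w * h w) * n w + (h w * h w) * An w)" for w
  define B3 where "B3 w = (-2 * h w) * Bm w + (h w * h w) * Bn w" for w
  have d3: "(g3 has_derivative (\<lambda>k. A3 w * k + B3 w * cnj k)) (at w)" if w: "w \<in> \<Omega>" for w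
    unfolding g3_def[abs_def] A3_def B3_def
    by (rule form_add[OF form_mult[OF DERIV_cmult[OF dh[OF w]] dm[OF w]] form_mult[OF DERIV_mult[OF dh[OF w] dh[OF w]] dn[OF w]]])
  have cA3: "continuous_on \<Omega> A3" unfolding A3_def[abs_def]
    by (intro continuous_intros cm cn cAm cAn ch cdh)
  have cB3: "continuous_on \<Omega> B3" unfolding B3_def[abs_def]
    by (intro continuous_intros cBm cBn ch)
  have re3: "Im (B3 w) = 0" if "w \<in> \<Omega>" for w
    using BmE[OF that] BnR[OF that] by (simp add: B3_def algebra_simps)
  obtain y3 where y3: "\<And>w. w \<in> \<Omega> \<Longrightarrow> (y3 has_derivative (\<lambda>k. Re (g3 w * k))) (at w)"
    using poincare_sc[OF oS sc d3 cA3 cB3 re3] by blast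
  have r3: "rep \<Omega> y3 g3 A3 B3" unfolding rep_def using y3 d3 cA3 cB3 by auto
  define X where "X w = (vector [M w, y2 w, (N w + y3 w) / 2, (N w - y3 w) / 2] :: real^4)" for w
  have comp: "\<exists>Aj. rep \<Omega> (\<lambda>w. X w $ j) (\<lambda>w. m w * av (h w) $ j + n w * bv (h w) $ j) Aj
                 (\<lambda>w. Bm w * av (h w) $ j + Bn w * bv (h w) $ j)" for j
  proof -
    have "j = 1 \<or> j = 2 \<or> j = 3 \<or> j = 4" using exhaust_4 by auto
    then show ?thesis
    proof (elim disjE)
      assume j: "j = 1"
      show ?thesis
        by (rule exI, rule rep_cong[OF oS rM]) (simp add: j X_def av_def bv_def)
    next
      assume j: "j = 2"
      show ?thesis
        by (rule exI, rule rep_cong[OF oS r2]) (simp add: j X_def av_def bv_def g2_def B2_def algebra_simps)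
    next
      assume j: "j = 3"
      show ?thesis
        by (rule exI[of _ "\<lambda>w. of_real (1/2) * An w + of_real (1/2) * A3 w"], rule rep_cong[OF oS rep_lin[OF rN r3, of "1/2" "1/2"]])
           (simp add: j X_def av_def bv_def g3_def B3_def field_simps power2_eq_square)
    next
      assume j: "j = 4"
      show ?thesis
        by (rule exI[of _ "\<lambda>w. of_real (1/2) * An w + of_real (-1/2) * A3 w"], rule rep_cong[OF oS rep_lin[OF rN r3, of "1/2" "-1/2"]])
           (simp add: j X_def av_def bv_def g3_def B3_def field_simps power2_eq_square)
    qed
  qed
  have "\<forall>z\<in>\<Omega>. X z $ 1 = M z \<and> X z $ 3 + X z $ 4 = N z" by (simp add: X_def field_simps)
  then show ?thesis using rM mM rN nN comp by blast
qed


lemma rdz_lin: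
  fixes f :: "complex \<Rightarrow> real"
  assumes "(f has_derivative D) (at z)"
  shows "rdz f z = Complex (D 1) (- D \<i>) / 2"
proof -
  have l: "linear D" using assms has_derivative_linear by blast
  have "D = (\<lambda>h. Re (Complex (D 1) (- D \<i>) * h))"
  proof
    fix h show "D h = Re (Complex (D 1) (- D \<i>) * h)"
      by (subst lin_decomp[OF l]) (simp add: algebra_simps)
  qed
  then show ?thesis using rdz_rep[of f "Complex (D 1) (- D \<i>)" z] assms by simp
qed

lemma XzW_eq: "XzW h M N z = (\<chi> j. rdz M z * av (h z) $ j + rdz N z * bv (h z) $ j)"
  unfolding XzW_def av_def bv_def by simp

theorem mainTheorem6:
  fixes \<Omega> :: "complex set" and h :: "complex \<Rightarrow> complex" and M N :: "complex \<Rightarrow> real"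
  assumes "open \<Omega>" and "connected \<Omega>" and "simply_connected \<Omega>"
    and "weierstrass_data_2 \<Omega> h M N"
  shows "\<exists>X :: complex \<Rightarrow> real^4.
           (\<forall>z\<in>\<Omega>. Xz X z = XzW h M N z) \<and>
           (\<forall>Y :: complex \<Rightarrow> real^4.
               (\<forall>z\<in>\<Omega>. Y differentiable (at z)) \<and> (\<forall>z\<in>\<Omega>. Xz Y z = XzW h M N z)
               \<longrightarrow> (\<exists>c. \<forall>z\<in>\<Omega>. Y z = X z + c)) \<and>
           conformal_spacelike_immersion \<Omega> X \<and>
           marginally_trapped \<Omega> X \<and>
           (\<forall>z\<in>\<Omega>. confLambda X z = 4 * (cmod (rdz M z - complex_of_real (Re (h z)) * rdz N z))\<^sup>2) \<and>
           (\<exists>c. \<forall>z\<in>\<Omega>. X z $ 1 = M z + c) \<and>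
           (\<exists>c. \<forall>z\<in>\<Omega>. X z $ 3 + X z $ 4 = N z + c)"
proof -
  note oS = assms(1) and cS = assms(2)
  have nz: "\<And>z. z \<in> \<Omega> \<Longrightarrow> rdz M z - complex_of_real (Re (h z)) * rdz N z \<noteq> 0"
    using assms(4) unfolding weierstrass_data_2_def by auto
  obtain m Am Bm n An Bn and X :: "complex \<Rightarrow> real^4" where rM: "rep \<Omega> M m Am Bm" and mM: "\<forall>w\<in>\<Omega>. m w = 2 * rdz M w"
    and rN: "rep \<Omega> N n An Bn" and nN: "\<forall>w\<in>\<Omega>. n w = 2 * rdz N w"
    and comp: "\<And>j. \<exists>Aj. rep \<Omega> (\<lambda>w. X w $ j) (\<lambda>w. m w * av (h w) $ j + n w * bv (h w) $ j) Aj
                 (\<lambda>w. Bm w * av (h w) $ j + Bn w * bv (h w) $ j)"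
    and X13: "\<forall>z\<in>\<Omega>. X z $ 1 = M z \<and> X z $ 3 + X z $ 4 = N z"
    using construct[OF assms(1,3,4)] by blast
  have fdX: "((\<lambda>w. X w $ j) has_derivative (\<lambda>k. Re ((m z * av (h z) $ j + n z * bv (h z) $ j) * k))) (at z)"
    if "z \<in> \<Omega>" for z j
    using comp[of j] that unfolding rep_def by blast
  have gdX: "\<exists>Aj. ((\<lambda>w. m w * av (h w) $ j + n w * bv (h w) $ j) has_derivative
      (\<lambda>k. Aj * k + (Bm z * av (h z) $ j + Bn z * bv (h z) $ j) * cnj k)) (at z)"
    if "z \<in> \<Omega>" for z j
    using comp[of j] that unfolding rep_def by blast
  have XzX_half: "Xz X w $ j = 1/2 * (m w * av (h w) $ j + n w * bv (h w) $ j)" if "w \<in> \<Omega>" for w j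
    unfolding Xz_def using rdz_rep[OF fdX[OF that]] by simp
  have XzX: "Xz X z = (\<chi> j. rdz M z * av (h z) $ j + rdz N z * bv (h z) $ j)" if z: "z \<in> \<Omega>" for z
    unfolding vec_eq_iff using XzX_half[OF z] mM nN z by (simp add: algebra_simps)
  have XzzX: "Xzzbar X z = (\<chi> j. (1/2 * Bm z) * av (h z) $ j + (1/2 * Bn z) * bv (h z) $ j)" if z: "z \<in> \<Omega>" for z
    unfolding vec_eq_iff Xzzbar_def
  proof (intro allI)
    fix j
    obtain Aj where d: "((\<lambda>w. m w * av (h w) $ j + n w * bv (h w) $ j) has_derivative
      (\<lambda>k. Aj * k + (Bm z * av (h z) $ j + Bn z * bv (h z) $ j) * cnj k)) (at z)"
      using gdX[OF z] by blast
    have "dzbar (\<lambda>w. Xz X w $ j) z = 1/2 * (Bm z * av (h z) $ j + Bn z * bv (h z) $ j)"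
      by (rule half_deriv[OF oS z d]) (simp add: XzX_half)
    then show "(\<chi> j. dzbar (\<lambda>w. Xz X w $ j) z) $ j =
         (\<chi> j. 1 / 2 * Bm z * av (h z) $ j + 1 / 2 * Bn z * bv (h z) $ j) $ j"
      by (simp add: algebra_simps)
  qed
  have Lam: "2 * lor (Xz X z) (cvec (Xz X z)) = complex_of_real (4 * (cmod (rdz M z - complex_of_real (Re (h z)) * rdz N z))\<^sup>2)"
    if "z \<in> \<Omega>" for z
    using herm_comb XzX[OF that] by simp
  have LamX: "confLambda X z = 4 * (cmod (rdz M z - complex_of_real (Re (h z)) * rdz N z))\<^sup>2"
    if "z \<in> \<Omega>" for z
    unfolding confLambda_def Lam[OF that] by simp
  have C2: "C2_on \<Omega> (\<lambda>w. X w $ j)" for j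
    using comp[of j] rep_C2[OF oS] by blast
  have csi: "conformal_spacelike_immersion \<Omega> X"
    unfolding conformal_spacelike_immersion_def
  proof (intro conjI allI ballI C2)
    fix z assume z: "z \<in> \<Omega>"
    show "lor (Xz X z) (Xz X z) = 0" using null_comb XzX[OF z] by simp
    show "2 * lor (Xz X z) (cvec (Xz X z)) = complex_of_real (confLambda X z)"
      using Lam[OF z] LamX[OF z] by simp
    show "0 < confLambda X z" using LamX[OF z] nz[OF z] by simp
  qed
  have mt: "marginally_trapped \<Omega> X"
    unfolding marginally_trapped_def
  proof
    fix z assume z: "z \<in> \<Omega>"
    define c where "c = complex_of_real (4 / confLambda X z)"
    have "meanH X z = (\<chi> j. (c * (1/2 * Bm z)) * av (h z) $ j + (c * (1/2 * Bn z)) * bv (h z) $ j)"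
      unfolding meanH_def XzzX[OF z] c_def[symmetric] by (simp add: algebra_simps)
    then show "lor (meanH X z) (meanH X z) = 0" by (simp only: null_comb)
  qed
  have uniq: "\<exists>c. \<forall>z\<in>\<Omega>. Y z = X z + c"
    if Yd: "\<forall>z\<in>\<Omega>. Y differentiable (at z)" and YX: "\<forall>z\<in>\<Omega>. Xz Y z = XzW h M N z" for Y :: "complex \<Rightarrow> real^4"
  proof -
    have "\<exists>c. \<forall>z\<in>\<Omega>. Y z $ j - X z $ j = c" for j
    proof -
      have dY: "\<exists>D. ((\<lambda>w. Y w $ j) has_derivative D) (at z)" if z: "z \<in> \<Omega>" for z
      proof -
        obtain DY where "(Y has_derivative DY) (at z)" using Yd z unfolding differentiable_def by blast
        from bounded_linear.has_derivative[OF bounded_linear_vec_nth this] show ?thesis by blast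
      qed
      have d0: "((\<lambda>w. Y w $ j - X w $ j) has_derivative (\<lambda>k. 0)) (at z within \<Omega>)" if z: "z \<in> \<Omega>" for z
      proof -
        obtain D where D: "((\<lambda>w. Y w $ j) has_derivative D) (at z)" using dY[OF z] by blast
        define G where "G k = Re ((m z * av (h z) $ j + n z * bv (h z) $ j) * k)" for k
        have G: "((\<lambda>w. X w $ j) has_derivative G) (at z)" unfolding G_def using fdX[OF z] .
        have "Xz Y z = Xz X z" using YX z XzX[OF z] XzW_eq[of h M N z] by simp
        then have "Xz Y z $ j = Xz X z $ j" by simp
        then have "rdz (\<lambda>w. Y w $ j) z = rdz (\<lambda>w. X w $ j) z" by (simp add: Xz_def)
        then have "Complex (D 1) (- D \<i>) = Complex (G 1) (- G \<i>)"
          unfolding rdz_lin[OF D] rdz_lin[OF G] by simp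
        then have e1: "D 1 = G 1" and e2: "D \<i> = G \<i>" by auto
        have lD: "linear D" using D has_derivative_linear by blast
        have lG: "linear G" using G has_derivative_linear by blast
        have "(\<lambda>k. D k - G k) = (\<lambda>k. 0)"
        proof
          fix k show "D k - G k = 0"
            by (subst lin_decomp[OF lD], subst lin_decomp[OF lG]) (simp add: e1 e2)
        qed
        then have "((\<lambda>w. Y w $ j - X w $ j) has_derivative (\<lambda>k. 0)) (at z)"
          using has_derivative_diff[OF D G] by simp
        then show ?thesis by (rule has_derivative_at_withinI)
      qed
      have cont: "continuous_on \<Omega> (\<lambda>w. Y w $ j - X w $ j)"
      proof (rule continuous_at_imp_continuous_on, intro ballI)
        fix z assume z: "z \<in> \<Omega>"
        obtain D where D: "((\<lambda>w. Y w $ j) has_derivative D) (at z)" using dY[OF z] by blast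
        have "((\<lambda>w. Y w $ j - X w $ j) has_derivative (\<lambda>k. D k - Re ((m z * av (h z) $ j + n z * bv (h z) $ j) * k))) (at z)"
          using has_derivative_diff[OF D fdX[OF z]] .
        then show "isCont (\<lambda>w. Y w $ j - X w $ j) z" by (rule has_derivative_continuous)
      qed
      have "(\<lambda>w. Y w $ j - X w $ j) constant_on \<Omega>"
        by (rule has_derivative_zero_connected_constant_on[OF cS oS finite.emptyI cont]) (use d0 in auto)
      then show ?thesis unfolding constant_on_def by blast
    qed
    then obtain cf where cf: "\<And>j. \<forall>z\<in>\<Omega>. Y z $ j - X z $ j = cf j" by metis
    show ?thesis
    proof (intro exI[of _ "\<chi> j. cf j"] ballI)
      fix z assume "z \<in> \<Omega>"
      then show "Y z = X z + (\<chi> j. cf j)" using cf unfolding vec_eq_iff by (simp add: algebra_simps)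
    qed
  qed
  show ?thesis
  proof (intro exI[of _ X] conjI ballI allI impI)
    show "\<And>z. z \<in> \<Omega> \<Longrightarrow> Xz X z = XzW h M N z" using XzX XzW_eq by simp
    show "\<And>Y. (\<forall>z\<in>\<Omega>. Y differentiable at z) \<and> (\<forall>z\<in>\<Omega>. Xz Y z = XzW h M N z) \<Longrightarrow> \<exists>c. \<forall>z\<in>\<Omega>. Y z = X z + c"
      using uniq by blast
    show "conformal_spacelike_immersion \<Omega> X" by (rule csi)
    show "marginally_trapped \<Omega> X" by (rule mt)
    show "\<And>z. z \<in> \<Omega> \<Longrightarrow> confLambda X z = 4 * (cmod (rdz M z - complex_of_real (Re (h z)) * rdz N z))\<^sup>2"
      by (rule LamX)
    show "\<exists>c. \<forall>z\<in>\<Omega>. X z $ 1 = M z + c" using X13 by (intro exI[of _ 0]) auto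
    show "\<exists>c. \<forall>z\<in>\<Omega>. X z $ 3 + X z $ 4 = N z + c" using X13 by (intro exI[of _ 0]) auto
  qed
qed

end
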